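(* Let $\alpha\in(0,1)$, $T>0$, $\mathcal{A}\in\mathbb{C}^{d\times d}$, $x_0\in\mathbb{C}^d$, and $\vartheta(t)=\sum_{n=0}^\infty\vartheta_nt^n$ with $\vartheta_n\in\mathbb{C}^d$ and $\sum_n|\vartheta_n|T^n<\infty$. Then $$x(t)=\mathcal{E}_\alpha(\mathcal{A}t)x_0+\sum_{n=0}^\infty\sum_{k=0}^{n-1}\mathcal{A}^k\frac{\prod_{j=n-k}^n\Gamma(j-\alpha+1)}{\Gamma(2-\alpha)^{k+1}\prod_{j=n-k}^n\Gamma(j+1)}\vartheta_{n-k-1}\,t^n$$ satisfies $x(0)=x_0$ and ${}^LD^\alpha x(t)=\mathcal{A}x(t)+\vartheta(t)$ for every $t\in[0,T]$.
   Context: $\mathcal{E}_\alpha(s)=\sum_{n=0}^\infty\frac{s^n}{\Gamma(2-\alpha)^n\prod_{j=1}^n\frac{\Gamma(j+1)}{\Gamma(j+1-\alpha)}}$ (matrix arguments allowed). Empty sums are $0$. Caputo derivative ${}^CD^\alpha x(t)=\frac{1}{\Gamma(1-\alpha)}\int_0^t (t-\tau)^{-\alpha}x'(\tau)d\tau$; L-fractional derivative ${}^LD^\alpha x(t)=\frac{\Gamma(2-\alpha)}{t^{1-\alpha}}{}^CD^\alpha x(t)$ for $t>0$, extended to $t=0$ by continuity (value $x'(0)$) for $C^2$ functions. *)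

theory Defs
  imports "HOL-Analysis.Analysis"
begin

primrec mpow :: "'a::semiring_1 ^'n ^'n \<Rightarrow> nat \<Rightarrow> 'a ^'n ^'n" where
  "mpow M 0 = mat 1"
| "mpow M (Suc k) = M ** mpow M k"

definition Ecoeff :: "real \<Rightarrow> nat \<Rightarrow> real" where
  "Ecoeff \<alpha> n = 1 / (Gamma (2 - \<alpha>) ^ n * (\<Prod>j=1..n. Gamma (real j + 1) / Gamma (real j + 1 - \<alpha>)))"

definition Emat :: "real \<Rightarrow> complex ^'d ^'d \<Rightarrow> complex ^'d ^'d" where
  "Emat \<alpha> S = (\<Sum>n. Ecoeff \<alpha> n *\<^sub>R mpow S n)"

definition caputo :: "real \<Rightarrow> (real \<Rightarrow> complex ^'d) \<Rightarrow> real \<Rightarrow> complex ^'d" where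
  "caputo \<alpha> x t = (1 / Gamma (1 - \<alpha>)) *\<^sub>R
     integral {0..t} (\<lambda>\<tau>. ((t - \<tau>) powr (- \<alpha>)) *\<^sub>R vector_derivative x (at \<tau> within {0..t}))"

text \<open>L-fractional derivative; at t = 0 it is given the value x'(0) (right derivative).\<close>
definition LD :: "real \<Rightarrow> (real \<Rightarrow> complex ^'d) \<Rightarrow> real \<Rightarrow> complex ^'d" where
  "LD \<alpha> x t = (if t = 0 then vector_derivative x (at 0 within {0..})
               else (Gamma (2 - \<alpha>) / t powr (1 - \<alpha>)) *\<^sub>R caputo \<alpha> x t)"

end

theory Submission
  imports Defs
begin


definition cc :: "real \<Rightarrow> nat \<Rightarrow> real" where
  "cc \<alpha> n = Gamma (2 - \<alpha>) * Gamma (real n + 1) / Gamma (real n + 1 - \<alpha>)"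

lemma Gamma_plus1_pos: "(x::real) > 0 \<Longrightarrow> Gamma (x + 1) = x * Gamma x"
  by (rule Gamma_plus1) (auto dest: nonpos_Ints_nonpos)

lemma cc_pos: assumes "\<alpha> < 1" "0 < \<alpha>" shows "cc \<alpha> n > 0"
  unfolding cc_def using assms by (intro divide_pos_pos mult_pos_pos Gamma_real_pos) auto

lemma cc_Suc: assumes "\<alpha> < 1" "0 < \<alpha>"
  shows "cc \<alpha> (Suc n) = cc \<alpha> n * (real n + 1) / (real n + 1 - \<alpha>)"
proof -
  have a: "Gamma (real (Suc n) + 1) = (real n + 1) * Gamma (real n + 1)"
    using Gamma_plus1_pos[of "real n + 1"] by (simp add: add_ac)
  have b: "Gamma (real (Suc n) + 1 - \<alpha>) = (real n + 1 - \<alpha>) * Gamma (real n + 1 - \<alpha>)"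
    using Gamma_plus1_pos[of "real n + 1 - \<alpha>"] assms by (simp add: algebra_simps)
  have "Gamma (real n + 1 - \<alpha>) > 0" using assms by (intro Gamma_real_pos) auto
  moreover have "real n + 1 - \<alpha> > 0" using assms by auto
  ultimately show ?thesis unfolding cc_def a b by (simp add: field_simps)
qed

lemma cc_1: assumes "\<alpha> < 1" "0 < \<alpha>" shows "cc \<alpha> 1 = 1"
proof -
  have "Gamma (2::real) = 1" using Gamma_fact[of 1] by simp
  moreover have "Gamma (2 - \<alpha>) > 0" using assms by (intro Gamma_real_pos) auto
  ultimately show ?thesis unfolding cc_def by (simp add: numeral_2_eq_2 add_ac)
qed

lemma cc_mono_step: assumes "\<alpha> < 1" "0 < \<alpha>"
  shows "cc \<alpha> (Suc n) \<ge> cc \<alpha> n + \<alpha> / (real n + 1) * cc \<alpha> n"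
proof -
  have p: "cc \<alpha> n > 0" by (rule cc_pos[OF assms])
  have d: "real n + 1 - \<alpha> > 0" using assms by auto
  have "(real n + 1) / (real n + 1 - \<alpha>) \<ge> 1 + \<alpha> / (real n + 1)"
    using d assms by (simp add: field_simps)
  then have "cc \<alpha> n * ((real n + 1) / (real n + 1 - \<alpha>)) \<ge> cc \<alpha> n * (1 + \<alpha> / (real n + 1))"
    using p by (intro mult_left_mono) auto
  then show ?thesis using cc_Suc[OF assms, of n] by (simp add: algebra_simps)
qed

lemma cc_ge1: assumes "\<alpha> < 1" "0 < \<alpha>" shows "cc \<alpha> (Suc n) \<ge> 1"
proof (induction n)
  case 0 then show ?case using cc_1[OF assms] by simp
next
  case (Suc n)
  have "cc \<alpha> (Suc (Suc n)) \<ge> cc \<alpha> (Suc n) + \<alpha> / (real (Suc n) + 1) * cc \<alpha> (Suc n)"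
    by (rule cc_mono_step[OF assms])
  moreover have "\<alpha> / (real (Suc n) + 1) * cc \<alpha> (Suc n) \<ge> 0"
    using assms cc_pos[OF assms, of "Suc n"] by (intro mult_nonneg_nonneg divide_nonneg_pos) auto
  ultimately show ?case using Suc by linarith
qed

lemma cc_harm: assumes "\<alpha> < 1" "0 < \<alpha>" shows "cc \<alpha> (Suc n) \<ge> \<alpha> * harm (Suc n)"
proof (induction n)
  case 0 then show ?case using cc_1[OF assms] assms by (simp add: harm_def)
next
  case (Suc n)
  have "cc \<alpha> (Suc (Suc n)) \<ge> cc \<alpha> (Suc n) + \<alpha> / (real (Suc n) + 1) * cc \<alpha> (Suc n)"
    by (rule cc_mono_step[OF assms])
  moreover have "\<alpha> / (real (Suc n) + 1) * cc \<alpha> (Suc n) \<ge> \<alpha> / (real (Suc n) + 1)"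
  proof -
    have "\<alpha> / (real (Suc n) + 1) * 1 \<le> \<alpha> / (real (Suc n) + 1) * cc \<alpha> (Suc n)"
      using assms cc_ge1[OF assms, of n] by (intro mult_left_mono) auto
    then show ?thesis by simp
  qed
  moreover have "harm (Suc (Suc n)) = harm (Suc n) + 1 / (real (Suc n) + 1)"
    by (simp add: harm_Suc inverse_eq_divide add_ac)
  ultimately show ?case using Suc by (simp add: algebra_simps)
qed

lemma cc_eventually_ge: assumes "\<alpha> < 1" "0 < \<alpha>"
  shows "\<exists>N. \<forall>n\<ge>N. cc \<alpha> (Suc n) \<ge> M"
proof -
  define m where "m = nat \<lceil>exp (M / \<alpha>)\<rceil>"
  have "real m + 1 > exp (M / \<alpha>)" unfolding m_def by linarith
  then have "ln (real m + 1) > M / \<alpha>"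
    by (metis exp_gt_zero exp_ln_iff ln_less_cancel_iff ln_exp order_less_trans)
  then have m: "harm m > M / \<alpha>" using ln_le_harm[of m] by linarith
  show ?thesis
  proof (intro exI allI impI)
    fix n assume "n \<ge> m"
    have "harm (Suc n) \<ge> (harm m :: real)" using \<open>n \<ge> m\<close> by (intro harm_mono) auto
    then have "\<alpha> * harm (Suc n) \<ge> M" using m assms by (simp add: field_simps) (smt (verit) mult_left_mono)
    then show "cc \<alpha> (Suc n) \<ge> M" using cc_harm[OF assms, of n] by linarith
  qed
qed



lemma summable_rec:
  fixes u w :: "nat \<Rightarrow> real"
  assumes u0: "\<And>n. u n \<ge> 0" and rec: "\<And>n. n \<ge> N \<Longrightarrow> u (Suc n) \<le> u n / 2 + w n"
    and sw: "summable w" and w0: "\<And>n. w n \<ge> 0"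
  shows "summable u"
proof -
  define v where "v n = u (n + N)" for n
  define w' where "w' n = w (n + N)" for n
  have sw': "summable w'" unfolding w'_def using sw by simp
  define W where "W = suminf w'"
  have vrec: "v (Suc n) \<le> v n / 2 + w' n" for n
    unfolding v_def w'_def using rec[of "n + N"] by simp
  have pw: "(\<Sum>i<m. w' i) \<le> W" for m
    unfolding W_def by (rule sum_le_suminf[OF sw']) (auto simp: w'_def w0)
  have bnd: "(\<Sum>i<m. v i) \<le> 2 * (v 0 + W)" for m
  proof (cases m)
    case 0 then show ?thesis using pw[of 0] u0[of N] by (simp add: v_def)
  next
    case (Suc k)
    have "(\<Sum>i<Suc k. v i) = v 0 + (\<Sum>i<k. v (Suc i))"
      by (rule sum.lessThan_Suc_shift)
    also have "\<dots> \<le> v 0 + (\<Sum>i<k. v i / 2 + w' i)"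
      by (intro add_left_mono sum_mono vrec)
    also have "\<dots> = v 0 + (\<Sum>i<k. v i) / 2 + (\<Sum>i<k. w' i)"
      by (simp add: sum.distrib sum_divide_distrib)
    also have "\<dots> \<le> v 0 + (\<Sum>i<Suc k. v i) / 2 + W"
    proof -
      have "v k \<ge> 0" using u0 by (simp add: v_def)
      then show ?thesis using pw[of k] by (simp add: add_divide_distrib)
    qed
    finally have "(\<Sum>i<Suc k. v i) \<le> v 0 + (\<Sum>i<Suc k. v i) / 2 + W" .
    then show ?thesis using Suc by (simp only:) (simp add: field_simps)
  qed
  have "summable v"
    by (rule summableI_nonneg_bounded[of v, OF _ bnd]) (simp add: v_def u0)
  then show ?thesis unfolding v_def by simp
qed

lemma Ecoeff_0: "Ecoeff \<alpha> 0 = 1"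
  by (simp add: Ecoeff_def)

lemma Ecoeff_Suc: assumes "\<alpha> < 1" "0 < \<alpha>"
  shows "Ecoeff \<alpha> (Suc n) = Ecoeff \<alpha> n / cc \<alpha> (Suc n)"
proof -
  define P where "P n = (\<Prod>j=1..n. Gamma (real j + 1) / Gamma (real j + 1 - \<alpha>))" for n
  have PS: "P (Suc n) = P n * (Gamma (real (Suc n) + 1) / Gamma (real (Suc n) + 1 - \<alpha>))"
    unfolding P_def by (simp add: prod.nat_ivl_Suc' mult.commute)
  have G: "Gamma (2 - \<alpha>) > 0" using assms by (intro Gamma_real_pos) auto
  have "P n > 0" unfolding P_def using assms
    by (intro prod_pos divide_pos_pos Gamma_real_pos) auto
  moreover have "Gamma (real n + 2) > 0" "Gamma (real n + 2 - \<alpha>) > 0"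
    using assms by (intro Gamma_real_pos; simp)+
  ultimately show ?thesis
    unfolding Ecoeff_def cc_def P_def[symmetric] PS using G
    by (simp add: field_simps add_ac)
qed

lemma Ecoeff_pos: assumes "\<alpha> < 1" "0 < \<alpha>" shows "Ecoeff \<alpha> n > 0"
  by (induction n) (simp_all add: Ecoeff_0 Ecoeff_Suc[OF assms] cc_pos[OF assms])

lemma summable_Ecoeff: assumes "\<alpha> < 1" "0 < \<alpha>" "r \<ge> 0"
  shows "summable (\<lambda>n. Ecoeff \<alpha> n * r ^ n)"
proof -
  obtain N where N: "\<And>n. n \<ge> N \<Longrightarrow> cc \<alpha> (Suc n) \<ge> 2 * r + 1"
    using cc_eventually_ge[OF assms(1,2)] by blast
  show ?thesis
  proof (rule summable_rec[where w="\<lambda>_. 0" and N=N])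
    fix n assume "n \<ge> N"
    have c: "cc \<alpha> (Suc n) \<ge> 2 * r + 1" using N[OF \<open>n \<ge> N\<close>] .
    have e: "Ecoeff \<alpha> n * r ^ n \<ge> 0" using Ecoeff_pos[OF assms(1,2), of n] assms(3)
      by (intro mult_nonneg_nonneg zero_le_power) auto
    have "Ecoeff \<alpha> (Suc n) * r ^ Suc n = (Ecoeff \<alpha> n * r ^ n) * (r / cc \<alpha> (Suc n))"
      by (simp add: Ecoeff_Suc[OF assms(1,2)])
    also have "\<dots> \<le> (Ecoeff \<alpha> n * r ^ n) * (1/2)"
      using c assms e by (intro mult_left_mono) (auto simp: field_simps)
    finally show "Ecoeff \<alpha> (Suc n) * r ^ Suc n \<le> Ecoeff \<alpha> n * r ^ n / 2 + 0" by simp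
  qed (use assms in \<open>auto intro!: mult_nonneg_nonneg less_imp_le[OF Ecoeff_pos[OF assms(1,2)]]\<close>)
qed



lemma powser_zero_scaleR: "(\<Sum>n. (0::real) ^ n *\<^sub>R v n) = (v 0 :: 'a::real_normed_vector)"
proof -
  have "(\<Sum>n. (0::real) ^ n *\<^sub>R v n) = (\<Sum>n\<in>{0}. (0::real) ^ n *\<^sub>R v n)"
    by (rule suminf_finite) auto
  then show ?thesis by simp
qed

lemma powser_summable_le:
  fixes a :: "nat \<Rightarrow> 'b::banach"
  assumes "summable (\<lambda>n. norm (a n) * R ^ n)" "\<bar>t\<bar> \<le> R"
  shows "summable (\<lambda>n. norm (t ^ n *\<^sub>R a n))" "summable (\<lambda>n. t ^ n *\<^sub>R a n)"
proof -
  have b: "norm (norm (t ^ n *\<^sub>R a n)) \<le> norm (a n) * R ^ n" for n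
    using assms(2) by (simp add: power_abs mult.commute mult_left_mono power_mono)
      (metis abs_ge_zero mult.commute mult_left_mono norm_ge_zero power_mono)
  show "summable (\<lambda>n. norm (t ^ n *\<^sub>R a n))"
    by (rule summable_comparison_test'[OF assms(1) b])
  then show "summable (\<lambda>n. t ^ n *\<^sub>R a n)" by (rule summable_norm_cancel)
qed

lemma powser_deriv_summable:
  fixes a :: "nat \<Rightarrow> 'b::banach"
  assumes "summable (\<lambda>n. norm (a n) * R ^ n)" "\<bar>t\<bar> < R"
  shows "summable (\<lambda>n. real (Suc n) * norm (a (Suc n)) * \<bar>t\<bar> ^ n)"
proof -
  define c where "c n = norm (a n)" for n
  have "summable (\<lambda>n. diffs c n * \<bar>t\<bar> ^ n)"
  proof (rule termdiff_converges[where K=R])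
    show "norm \<bar>t\<bar> < R" using assms by simp
    fix x :: real assume "norm x < R"
    then have "\<bar>x\<bar> \<le> R" by simp
    have "norm (c n * x ^ n) \<le> norm (a n) * R ^ n" for n
      using \<open>\<bar>x\<bar> \<le> R\<close> by (simp add: c_def abs_mult power_abs mult_left_mono power_mono)
    then show "summable (\<lambda>n. c n * x ^ n)" by (rule summable_comparison_test'[OF assms(1)])
  qed
  then show ?thesis by (simp add: diffs_def c_def)
qed

lemma powser_vderiv:
  fixes a :: "nat \<Rightarrow> 'b::euclidean_space"
  assumes sa: "summable (\<lambda>n. norm (a n) * R ^ n)" and t: "\<bar>t\<bar> < R"
  shows "((\<lambda>t. \<Sum>n. t ^ n *\<^sub>R a n) has_vector_derivative
           (\<Sum>n. t ^ n *\<^sub>R (real (Suc n) *\<^sub>R a (Suc n)))) (at t)"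
proof -
  define D where "D = (\<Sum>n. t ^ n *\<^sub>R (real (Suc n) *\<^sub>R a (Suc n)))"
  have sD: "summable (\<lambda>n. t ^ n *\<^sub>R (real (Suc n) *\<^sub>R a (Suc n)))"
  proof (rule summable_norm_cancel, rule summable_comparison_test'[OF powser_deriv_summable[OF sa t]])
    fix n show "norm (norm (t ^ n *\<^sub>R (real (Suc n) *\<^sub>R a (Suc n)))) \<le> real (Suc n) * norm (a (Suc n)) * \<bar>t\<bar> ^ n"
      by (simp add: power_abs mult_ac abs_mult)
  qed
  have comp: "((\<lambda>t. (\<Sum>n. t ^ n *\<^sub>R a n) \<bullet> i) has_derivative (\<lambda>h. (h *\<^sub>R D) \<bullet> i)) (at t)"
    if i: "i \<in> Basis" for i
  proof -
    define c where "c n = a n \<bullet> i" for n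
    have sc: "summable (\<lambda>n. c n * R ^ n)"
    proof (rule summable_comparison_test'[OF sa])
      fix n
      have "\<bar>c n\<bar> \<le> norm (a n)" unfolding c_def using Basis_le_norm[OF i] .
      moreover have "R \<ge> 0" using t by linarith
      ultimately show "norm (c n * R ^ n) \<le> norm (a n) * R ^ n"
        by (simp add: abs_mult mult_right_mono)
    qed
    have "DERIV (\<lambda>x. \<Sum>n. c n * x ^ n) t :> (\<Sum>n. diffs c n * t ^ n)"
      by (rule termdiffs_strong[OF sc]) (use t in simp)
    moreover have "(\<Sum>n. diffs c n * t ^ n) = D \<bullet> i"
      unfolding D_def using bounded_linear.suminf[OF bounded_linear_inner_left sD, of i]
      by (simp add: diffs_def c_def inner_scaleR_left mult_ac)
    ultimately have d0: "((\<lambda>x. \<Sum>n. c n * x ^ n) has_derivative (*) (D \<bullet> i)) (at t)"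
      by (simp add: has_field_derivative_def)
    have eq: "(\<lambda>h. (h *\<^sub>R D) \<bullet> i) = (*) (D \<bullet> i)" by (auto simp: inner_scaleR_left)
    have d: "((\<lambda>x. \<Sum>n. c n * x ^ n) has_derivative (\<lambda>h. (h *\<^sub>R D) \<bullet> i)) (at t)"
      unfolding eq by (rule d0)
    show ?thesis
    proof (rule has_derivative_transform_within_open[OF d, of "{-R<..<R}"])
      show "open {-R<..<R}" by simp
      show "t \<in> {-R<..<R}" using t by auto
      fix y assume "y \<in> {-R<..<R}"
      then have "\<bar>y\<bar> \<le> R" by auto
      from powser_summable_le(2)[OF sa this]
      show "(\<Sum>n. c n * y ^ n) = (\<Sum>n. y ^ n *\<^sub>R a n) \<bullet> i"
        using bounded_linear.suminf[OF bounded_linear_inner_left, of "\<lambda>n. y ^ n *\<^sub>R a n" i]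
        by (simp add: c_def inner_scaleR_left mult.commute)
    qed
  qed
  show ?thesis unfolding has_vector_derivative_def D_def[symmetric]
    using comp by (subst has_derivative_componentwise_within) auto
qed



lemma beta_int:
  assumes a: "0 < \<alpha>" "\<alpha> < 1" and t: "t > 0"
  shows "((\<lambda>\<tau>. (t - \<tau>) powr (-\<alpha>) * \<tau> ^ n) has_integral
           (t powr (real n + 1 - \<alpha>) * Beta (real n + 1) (1 - \<alpha>))) {0..t}"
proof -
  define B where "B = Beta (real n + 1) (1 - \<alpha>)"
  define f where "f s = s ^ n * (1 - s) powr (-\<alpha>)" for s :: real
  have h0: "((\<lambda>s. s powr (real n + 1 - 1) * (1 - s) powr (1 - \<alpha> - 1)) has_integral B) {0..1}"
    unfolding B_def by (rule has_integral_Beta_real) (use a in auto)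
  have h1: "(f has_integral B) {0..1}"
  proof (rule has_integral_spike_finite[OF _ _ h0, of "{0}"])
    fix x assume "x \<in> {0..1::real} - {0}"
    then have "x > 0" by auto
    then show "f x = x powr (real n + 1 - 1) * (1 - x) powr (1 - \<alpha> - 1)"
      by (simp add: f_def powr_realpow)
  qed auto
  have h2: "((\<lambda>x. f ((1/t) *\<^sub>R x + 0)) has_integral (1 / (\<bar>1/t\<bar> ^ DIM(real))) *\<^sub>R B)
            ((\<lambda>x. (1 / (1/t)) *\<^sub>R x + -((1 / (1/t)) *\<^sub>R 0)) ` cbox 0 1)"
    by (rule has_integral_affinity) (use h1 t in auto)
  have img: "((\<lambda>x. (1 / (1/t)) *\<^sub>R x + -((1 / (1/t)) *\<^sub>R 0)) ` cbox 0 1) = {0..t}"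
    using t by (simp add: cbox_interval image_mult_atLeastAtMost[unfolded ])
  have h3: "((\<lambda>x. f (x / t)) has_integral (t * B)) {0..t}"
    using h2 t unfolding img by (simp add: divide_inverse mult.commute)
  have h4: "((\<lambda>x. f (x / t) * (t ^ n * t powr (-\<alpha>))) has_integral (t * B * (t ^ n * t powr (-\<alpha>)))) {0..t}"
    by (rule has_integral_mult_left[OF h3])
  have val: "t * B * (t ^ n * t powr (-\<alpha>)) = t powr (real n + 1 - \<alpha>) * B"
    using t by (simp add: powr_add powr_realpow[symmetric] powr_diff powr_minus field_simps)
  show ?thesis unfolding B_def[symmetric] val[symmetric]
  proof (rule has_integral_eq[OF _ h4])
    fix x assume x: "x \<in> {0..t}"
    have "(1 - x / t) powr (-\<alpha>) * t powr (-\<alpha>) = ((1 - x/t) * t) powr (-\<alpha>)"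
      using x t by (subst powr_mult) auto
    also have "(1 - x/t) * t = t - x" using t by (simp add: field_simps)
    finally have p: "(1 - x / t) powr (-\<alpha>) * t powr (-\<alpha>) = (t - x) powr (-\<alpha>)" .
    have q: "(x / t) ^ n * t ^ n = x ^ n" using t by (simp add: power_divide)
    show "f (x / t) * (t ^ n * t powr - \<alpha>) = (t - x) powr - \<alpha> * x ^ n"
      unfolding f_def using p q by (metis (no_types, lifting) mult.assoc mult.commute mult.left_commute)
  qed
qed


lemma at0_nonbot: "at (0::real) within {0..} \<noteq> bot"
proof -
  have "{(0::real)..} - {0} = {(0::real)<..}" by auto
  then show ?thesis by (simp add: at_within_eq_bot_iff closure_greaterThan)
qed


lemma aux_field: "(N::real) > 0 \<Longrightarrow> G > 0 \<Longrightarrow> G1 > 0 \<Longrightarrow> G2 > 0 \<Longrightarrow> G3 > 0 \<Longrightarrow>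
   x * (G * G1 / G3) * N / (G2 * (N * G) / G3) = x * G1 / G2"
  by (simp add: field_simps)

lemma beta_val:
  assumes a: "0 < \<alpha>" "\<alpha> < 1" and t: "t > 0"
  shows "t powr (real n + 1 - \<alpha>) * Beta (real n + 1) (1 - \<alpha>) * real (Suc n) / cc \<alpha> (Suc n)
         = t powr (1 - \<alpha>) * Gamma (1 - \<alpha>) / Gamma (2 - \<alpha>) * t ^ n"
proof -
  have g1: "Gamma (real n + 2) = (real n + 1) * Gamma (real n + 1)"
    using Gamma_plus1_pos[of "real n + 1"] by (simp add: add_ac)
  have p1: "Gamma (real n + 1) > 0" "Gamma (1 - \<alpha>) > 0" "Gamma (2 - \<alpha>) > 0"
           "Gamma (real n + 2 - \<alpha>) > 0"
    using a by (intro Gamma_real_pos; simp)+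
  have pw: "t powr (real n + 1 - \<alpha>) = t ^ n * t powr (1 - \<alpha>)"
  proof -
    have "t powr (real n + 1 - \<alpha>) = t powr (real n + (1 - \<alpha>))" by (simp add: algebra_simps)
    also have "\<dots> = t powr (real n) * t powr (1 - \<alpha>)" by (rule powr_add)
    finally show ?thesis using t by (simp add: powr_realpow)
  qed
  have e1: "real n + 1 + (1 - \<alpha>) = real n + 2 - \<alpha>" by simp
  have c: "cc \<alpha> (Suc n) = Gamma (2 - \<alpha>) * ((real n + 1) * Gamma (real n + 1)) / Gamma (real n + 2 - \<alpha>)"
    unfolding cc_def g1[symmetric] by (simp add: add_ac)
  have "t powr (real n + 1 - \<alpha>) * Beta (real n + 1) (1 - \<alpha>) * real (Suc n) / cc \<alpha> (Suc n)
     = (t ^ n * t powr (1 - \<alpha>)) * (Gamma (real n + 1) * Gamma (1 - \<alpha>) / Gamma (real n + 2 - \<alpha>)) * (real n + 1)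
       / (Gamma (2 - \<alpha>) * ((real n + 1) * Gamma (real n + 1)) / Gamma (real n + 2 - \<alpha>))"
    unfolding c Beta_def pw e1 by simp
  also have "\<dots> = (t ^ n * t powr (1 - \<alpha>)) * Gamma (1 - \<alpha>) / Gamma (2 - \<alpha>)"
    by (rule aux_field) (use p1 in auto)
  finally show ?thesis by (simp add: mult_ac)
qed

lemma LD_powser:
  fixes \<alpha> T :: real and a g :: "nat \<Rightarrow> complex ^'d" and f :: "real \<Rightarrow> complex ^'d"
  assumes \<alpha>: "0 < \<alpha>" "\<alpha> < 1" and T: "0 < T"
    and sg: "summable (\<lambda>n. norm (g n) * T ^ n)"
    and rec: "\<And>n. a (Suc n) = (1 / cc \<alpha> (Suc n)) *\<^sub>R g n"
    and fdef: "\<And>t. t \<in> {-T..T} \<Longrightarrow> f t = (\<Sum>n. t ^ n *\<^sub>R a n)"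
  shows "\<forall>t\<in>{0..T}. LD \<alpha> f t = (\<Sum>n. t ^ n *\<^sub>R g n)"
proof
  have ccp: "cc \<alpha> n > 0" for n using cc_pos \<alpha> by auto
  have normrec: "norm (a (Suc n)) = norm (g n) / cc \<alpha> (Suc n)" for n
    using ccp[of "Suc n"] by (simp add: rec)
  have sa: "summable (\<lambda>n. norm (a n) * T ^ n)"
  proof -
    have "summable (\<lambda>n. norm (a (Suc n)) * T ^ Suc n)"
    proof (rule summable_comparison_test'[where g="\<lambda>n. T * (norm (g n) * T ^ n)"])
      show "summable (\<lambda>n. T * (norm (g n) * T ^ n))" using sg by (rule summable_mult)
      fix n
      have "norm (g n) / cc \<alpha> (Suc n) \<le> norm (g n)"
      proof -
        have "norm (g n) * 1 \<le> norm (g n) * cc \<alpha> (Suc n)"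
          using cc_ge1[OF \<alpha>(2,1), of n] by (intro mult_left_mono) auto
        then show ?thesis using ccp[of "Suc n"] by (simp add: divide_le_eq)
      qed
      then have "(norm (g n) / cc \<alpha> (Suc n)) * (T * T ^ n) \<le> norm (g n) * (T * T ^ n)"
        using T by (intro mult_right_mono) auto
      then show "norm (norm (a (Suc n)) * T ^ Suc n) \<le> T * (norm (g n) * T ^ n)"
        using T by (simp add: normrec mult_ac abs_of_pos[OF ccp])
    qed
    then show ?thesis by (subst summable_Suc_iff[symmetric])
  qed
  define D where "D \<tau> = (\<Sum>n. \<tau> ^ n *\<^sub>R (real (Suc n) *\<^sub>R a (Suc n)))" for \<tau> :: real
  have deriv: "(f has_vector_derivative D \<tau>) (at \<tau>)" if "\<bar>\<tau>\<bar> < T" for \<tau>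
    unfolding D_def
  proof (rule has_vector_derivative_transform_within_open[OF powser_vderiv[OF sa that]])
    show "open {-T<..<T}" by simp
    show "\<tau> \<in> {-T<..<T}" using that by auto
    fix y assume "y \<in> {-T<..<T}" then show "(\<Sum>n. y ^ n *\<^sub>R a n) = f y" using fdef by auto
  qed
  fix t assume t: "t \<in> {0..T}"
  show "LD \<alpha> f t = (\<Sum>n. t ^ n *\<^sub>R g n)"
  proof (cases "t = 0")
    case True
    have "vector_derivative f (at 0 within {0..}) = D 0"
      by (rule vector_derivative_within[OF at0_nonbot has_vector_derivative_at_within[OF deriv]])
        (use T in simp)
    also have "D 0 = g 0" unfolding D_def powser_zero_scaleR
      using cc_1[OF \<alpha>(2,1)] by (simp add: rec)
    finally show ?thesis using True by (simp add: LD_def powser_zero_scaleR)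
  next
    case False
    then have t0: "t > 0" and tT: "t \<le> T" using t by auto
    define K0 where "K0 = t powr (1 - \<alpha>) * Gamma (1 - \<alpha>) / Gamma (2 - \<alpha>)"
    define v where "v n = real (Suc n) *\<^sub>R a (Suc n)" for n
    define \<beta> where "\<beta> n = t powr (real n + 1 - \<alpha>) * Beta (real n + 1) (1 - \<alpha>)" for n
    define S where "S = (\<Sum>n. t ^ n *\<^sub>R g n)"
    have K0pos: "K0 > 0" unfolding K0_def using t0 \<alpha> by (intro mult_pos_pos divide_pos_pos Gamma_real_pos) auto
    have key: "\<beta> n *\<^sub>R v n = K0 *\<^sub>R (t ^ n *\<^sub>R g n)" for n
    proof -
      have "\<beta> n *\<^sub>R v n = (\<beta> n * real (Suc n) / cc \<alpha> (Suc n)) *\<^sub>R g n"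
        unfolding v_def rec by simp
      also have "\<dots> = (K0 * t ^ n) *\<^sub>R g n"
        unfolding \<beta>_def K0_def beta_val[OF \<alpha> t0] by simp
      finally show ?thesis by simp
    qed
    have normv: "norm (v n) = real (Suc n) * norm (a (Suc n))" for n
      unfolding v_def by simp
    have key2: "\<beta> n * norm (v n) = K0 * (t ^ n * norm (g n))" for n
    proof -
      have "\<beta> n \<ge> 0" unfolding \<beta>_def using \<alpha> t0
        by (intro mult_nonneg_nonneg) (auto simp: Beta_def intro!: divide_nonneg_pos mult_nonneg_nonneg less_imp_le[OF Gamma_real_pos])
      then have "\<beta> n * norm (v n) = norm (\<beta> n *\<^sub>R v n)" by simp
      also have "\<dots> = K0 * (t ^ n * norm (g n))" unfolding key using K0pos t0 by simp
      finally show ?thesis .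
    qed
    have sS: "summable (\<lambda>n. t ^ n *\<^sub>R g n)"
      by (rule powser_summable_le(2)[OF sg]) (use t in auto)
    have sSn: "summable (\<lambda>n. t ^ n * norm (g n))"
      using powser_summable_le(1)[OF sg, of t] t0 tT by simp
    have s\<tau>: "summable (\<lambda>n. \<tau> ^ n * norm (v n))" if "0 \<le> \<tau>" "\<tau> < t" for \<tau>
    proof -
      have "\<bar>\<tau>\<bar> < T" using that tT by auto
      from powser_deriv_summable[OF sa this] show ?thesis
        using that by (simp add: normv mult_ac)
    qed
    define w where "w k \<tau> = (t - \<tau>) powr (-\<alpha>) * \<tau> ^ k * norm (v k)" for k \<tau>
    define W where "W \<tau> = (\<Sum>k. w k \<tau>)" for \<tau>
    have w0: "w k \<tau> \<ge> 0" if "\<tau> \<in> {0..t}" for k \<tau> unfolding w_def using that by auto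
    have sw: "summable (\<lambda>k. w k \<tau>)" if "\<tau> \<in> {0..t}" for \<tau>
    proof (cases "\<tau> = t")
      case True then show ?thesis by (simp add: w_def)
    next
      case False
      then have "summable (\<lambda>k. (t - \<tau>) powr (-\<alpha>) * (\<tau> ^ k * norm (v k)))"
        using that by (intro summable_mult s\<tau>) auto
      then show ?thesis by (simp add: w_def mult_ac)
    qed
    have intw: "((\<lambda>\<tau>. \<Sum>n<k. w n \<tau>) has_integral (\<Sum>n<k. \<beta> n * norm (v n))) {0..t}" for k
      unfolding w_def \<beta>_def
      by (intro has_integral_sum has_integral_mult_left beta_int \<alpha> t0) auto
    have Wint: "W integrable_on {0..t}"
    proof -
      have "W integrable_on {0..t} \<and> ((\<lambda>k. integral {0..t} (\<lambda>\<tau>. \<Sum>n<k. w n \<tau>)) \<longlongrightarrow> integral {0..t} W) sequentially"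
      proof (rule monotone_convergence_increasing)
        show "(\<lambda>\<tau>. \<Sum>n<k. w n \<tau>) integrable_on {0..t}" for k using intw by blast
        show "(\<Sum>n<k. w n \<tau>) \<le> (\<Sum>n<Suc k. w n \<tau>)" if "\<tau> \<in> {0..t}" for k \<tau>
          using w0[OF that, of k] by simp
        show "(\<lambda>k. \<Sum>n<k. w n \<tau>) \<longlonglongrightarrow> W \<tau>" if "\<tau> \<in> {0..t}" for \<tau>
          unfolding W_def by (rule summable_LIMSEQ[OF sw[OF that]])
        have "\<bar>integral {0..t} (\<lambda>\<tau>. \<Sum>n<k. w n \<tau>)\<bar> \<le> K0 * (\<Sum>n. t ^ n * norm (g n))" for k
        proof -
          have "integral {0..t} (\<lambda>\<tau>. \<Sum>n<k. w n \<tau>) = K0 * (\<Sum>n<k. t ^ n * norm (g n))"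
            using intw[of k] by (simp add: integral_unique key2 sum_distrib_left)
          moreover have "(\<Sum>n<k. t ^ n * norm (g n)) \<le> (\<Sum>n. t ^ n * norm (g n))"
            by (rule sum_le_suminf[OF sSn]) (use t0 in auto)
          moreover have "(\<Sum>n<k. t ^ n * norm (g n)) \<ge> 0" using t0 by (intro sum_nonneg) auto
          ultimately show ?thesis using K0pos by (simp add: mult_left_mono)
        qed
        then show "bounded (range (\<lambda>k. integral {0..t} (\<lambda>\<tau>. \<Sum>n<k. w n \<tau>)))"
          unfolding bounded_real by blast
      qed
      then show ?thesis by blast
    qed
    define hf where "hf \<tau> = (t - \<tau>) powr (-\<alpha>) *\<^sub>R D \<tau>" for \<tau>
    define F where "F k \<tau> = (\<Sum>n<k. ((t - \<tau>) powr (-\<alpha>) * \<tau> ^ n) *\<^sub>R v n)" for k \<tau>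
    have intF: "(F k has_integral (\<Sum>n<k. \<beta> n *\<^sub>R v n)) {0..t}" for k
      unfolding F_def \<beta>_def
      by (intro has_integral_sum has_integral_scaleR_left beta_int \<alpha> t0) auto
    have dc: "hf integrable_on {0..t}" "(\<lambda>k. integral {0..t} (F k)) \<longlonglongrightarrow> integral {0..t} hf"
    proof -
      have d1: "F k integrable_on {0..t}" for k using intF by blast
      have d2: "norm (F k \<tau>) \<le> W \<tau>" if "\<tau> \<in> {0..t}" for k \<tau>
      proof -
        have "norm (F k \<tau>) \<le> (\<Sum>n<k. norm (((t - \<tau>) powr (-\<alpha>) * \<tau> ^ n) *\<^sub>R v n))"
          unfolding F_def by (rule norm_sum)
        also have "\<dots> = (\<Sum>n<k. w n \<tau>)"
          using that by (intro sum.cong) (auto simp: w_def abs_mult)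
        also have "\<dots> \<le> W \<tau>" unfolding W_def
          by (rule sum_le_suminf[OF sw[OF that]]) (use w0[OF that] in auto)
        finally show ?thesis .
      qed
      have d3: "(\<lambda>k. F k \<tau>) \<longlonglongrightarrow> hf \<tau>" if "\<tau> \<in> {0..t}" for \<tau>
      proof (cases "\<tau> = t")
        case True then show ?thesis by (simp add: F_def hf_def)
      next
        case False
        then have \<tau>: "0 \<le> \<tau>" "\<tau> < t" using that by auto
        have sv: "summable (\<lambda>n. \<tau> ^ n *\<^sub>R v n)"
          by (rule summable_norm_cancel, rule summable_comparison_test'[OF s\<tau>[OF \<tau>]]) (use \<tau> in simp)
        have "hf \<tau> = (\<Sum>n. (t - \<tau>) powr (-\<alpha>) *\<^sub>R (\<tau> ^ n *\<^sub>R v n))"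
          unfolding hf_def D_def v_def[symmetric] by (rule suminf_scaleR_right[OF sv])
        moreover have "summable (\<lambda>n. (t - \<tau>) powr (-\<alpha>) *\<^sub>R (\<tau> ^ n *\<^sub>R v n))"
          using sv by (rule summable_scaleR_right)
        ultimately show ?thesis unfolding F_def
          using summable_LIMSEQ by (simp add: scaleR_scaleR)
      qed
      show "hf integrable_on {0..t}" "(\<lambda>k. integral {0..t} (F k)) \<longlonglongrightarrow> integral {0..t} hf"
        using dominated_convergence[OF d1 Wint d2 d3] by auto
    qed
    have "(\<lambda>k. integral {0..t} (F k)) = (\<lambda>k. K0 *\<^sub>R (\<Sum>n<k. t ^ n *\<^sub>R g n))"
    proof
      fix k show "integral {0..t} (F k) = K0 *\<^sub>R (\<Sum>n<k. t ^ n *\<^sub>R g n)"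
        using integral_unique[OF intF[of k]] by (simp add: key scaleR_sum_right)
    qed
    moreover have "(\<lambda>k. K0 *\<^sub>R (\<Sum>n<k. t ^ n *\<^sub>R g n)) \<longlonglongrightarrow> K0 *\<^sub>R S"
      unfolding S_def by (intro tendsto_scaleR tendsto_const summable_LIMSEQ sS)
    ultimately have intval: "integral {0..t} hf = K0 *\<^sub>R S"
      using dc(2) LIMSEQ_unique by metis
    have "integral {0..t} (\<lambda>\<tau>. (t - \<tau>) powr (-\<alpha>) *\<^sub>R vector_derivative f (at \<tau> within {0..t}))
          = integral {0..t} hf"
    proof (rule integral_cong)
      fix \<tau> assume \<tau>: "\<tau> \<in> {0..t}"
      show "(t - \<tau>) powr (-\<alpha>) *\<^sub>R vector_derivative f (at \<tau> within {0..t}) = hf \<tau>"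
      proof (cases "\<tau> = t")
        case True then show ?thesis by (simp add: hf_def)
      next
        case False
        then have "\<bar>\<tau>\<bar> < T" using \<tau> tT by auto
        then have "vector_derivative f (at \<tau> within {0..t}) = D \<tau>"
          by (rule vector_derivative_at_within_ivl[OF deriv]) (use \<tau> t0 in auto)
        then show ?thesis by (simp add: hf_def)
      qed
    qed
    then have cap: "caputo \<alpha> f t = (1 / Gamma (1 - \<alpha>)) *\<^sub>R (K0 *\<^sub>R S)"
      unfolding caputo_def intval by simp
    have one: "(Gamma (2 - \<alpha>) / t powr (1 - \<alpha>)) * (1 / Gamma (1 - \<alpha>) * K0) = 1"
    proof -
      have "Gamma (2 - \<alpha>) > 0" "Gamma (1 - \<alpha>) > 0" "t powr (1 - \<alpha>) > 0"
        using \<alpha> t0 by (auto intro!: Gamma_real_pos)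
      then show ?thesis unfolding K0_def by (simp add: field_simps)
    qed
    have "LD \<alpha> f t = (Gamma (2 - \<alpha>) / t powr (1 - \<alpha>)) *\<^sub>R caputo \<alpha> f t"
      using False by (simp add: LD_def)
    also have "\<dots> = ((Gamma (2 - \<alpha>) / t powr (1 - \<alpha>)) * (1 / Gamma (1 - \<alpha>) * K0)) *\<^sub>R S"
      by (simp only: cap scaleR_scaleR)
    also have "\<dots> = S" by (simp only: one scaleR_one)
    finally show ?thesis unfolding S_def .
  qed
qed



lemma mv_scaleR: "(A::complex^'d^'d) *v (c *\<^sub>R v) = c *\<^sub>R (A *v v)"
  by (simp add: vec_eq_iff matrix_vector_mult_def scaleR_sum_right)

lemma mv_add: "(A::complex^'d^'d) *v (u + v) = A *v u + A *v v"
  by (simp add: matrix_vector_right_distrib)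

lemma mv_sum: "(A::complex^'d^'d) *v (\<Sum>k\<in>S. f k) = (\<Sum>k\<in>S. A *v f k)"
  by (rule linear_sum[OF bounded_linear.linear[OF matrix_vector_mul_bounded_linear]])

lemma mpow_Suc_mv: "mpow A (Suc n) *v v = (A::complex^'d^'d) *v (mpow A n *v v)"
  by (simp add: matrix_vector_mul_assoc)

lemma scaleR_mat_mv: "(c *\<^sub>R (M::complex^'d^'d)) *v v = c *\<^sub>R (M *v v)"
  by (simp add: vec_eq_iff matrix_vector_mult_def scaleR_sum_right)

lemma scaleR_matmul: "(c *\<^sub>R (A::complex^'d^'d)) ** B = c *\<^sub>R (A ** B)"
  by (simp add: vec_eq_iff matrix_matrix_mult_def scaleR_sum_right)

lemma matmul_scaleR: "(A::complex^'d^'d) ** (c *\<^sub>R B) = c *\<^sub>R (A ** B)"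
  by (simp add: vec_eq_iff matrix_matrix_mult_def scaleR_sum_right)

lemma mpow_scaleR: "mpow (c *\<^sub>R (A::complex^'d^'d)) n = c ^ n *\<^sub>R mpow A n"
  by (induction n) (simp_all add: scaleR_matmul matmul_scaleR scaleR_scaleR)

lemma bl_mv_left: "bounded_linear (\<lambda>M::complex^'d^'d. M *v v)"
proof -
  have "linear (\<lambda>M::complex^'d^'d. M *v v)"
    by (rule linearI) (simp_all add: matrix_vector_mult_add_rdistrib scaleR_mat_mv)
  then show ?thesis by (simp add: linear_conv_bounded_linear)
qed

lemma norm_vec_le_sum: "norm (x::'a::real_normed_vector^'n) \<le> (\<Sum>i\<in>UNIV. norm (x $ i))"
  unfolding norm_vec_def by (rule L2_set_le_sum) auto

lemma entry_le: "norm ((M::complex^'d^'d) $ i $ j) \<le> norm (M *v axis j 1)"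
proof -
  have "(M *v axis j 1) $ i = M $ i $ j"
    by (simp add: matrix_vector_mult_def axis_def if_distrib cong: if_cong)
  then show ?thesis by (metis Finite_Cartesian_Product.norm_nth_le)
qed



lemma norm_axis_complex: "norm (axis j (1::complex)) = 1"
proof -
  have "(\<Sum>i\<in>UNIV. (norm (axis j (1::complex) $ i))\<^sup>2) = (\<Sum>i\<in>UNIV. if i = j then 1 else 0)"
    by (intro sum.cong) (auto simp: axis_def)
  then show ?thesis by (simp add: norm_vec_def L2_set_def)
qed

lemma mpow_mv_bound:
  assumes K: "\<And>v. norm ((A::complex^'d^'d) *v v) \<le> norm v * K" "K \<ge> 0"
  shows "norm (mpow A n *v v) \<le> K ^ n * norm v"
proof (induction n)
  case 0 then show ?case by simp
next
  case (Suc n)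
  have "norm (mpow A (Suc n) *v v) \<le> norm (mpow A n *v v) * K"
    unfolding mpow_Suc_mv by (rule K(1))
  also have "\<dots> \<le> K ^ n * norm v * K" using Suc K(2) by (intro mult_right_mono) auto
  finally show ?case by (simp add: mult_ac)
qed

lemma mpow_norm_bound:
  assumes K: "\<And>v. norm ((A::complex^'d^'d) *v v) \<le> norm v * K" "K \<ge> 0"
  shows "norm (mpow A n) \<le> real CARD('d) * real CARD('d) * K ^ n"
proof -
  have "norm (mpow A n) \<le> (\<Sum>i\<in>UNIV. norm (mpow A n $ i))" by (rule norm_vec_le_sum)
  also have "\<dots> \<le> (\<Sum>i\<in>(UNIV::'d set). \<Sum>j\<in>(UNIV::'d set). K ^ n)"
  proof (intro sum_mono)
    fix i
    have "norm (mpow A n $ i) \<le> (\<Sum>j\<in>UNIV. norm (mpow A n $ i $ j))" by (rule norm_vec_le_sum)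
    also have "\<dots> \<le> (\<Sum>j\<in>(UNIV::'d set). K ^ n)"
    proof (intro sum_mono)
      fix j
      have "norm (mpow A n $ i $ j) \<le> norm (mpow A n *v axis j 1)" by (rule entry_le)
      also have "\<dots> \<le> K ^ n * norm (axis j (1::complex))" by (rule mpow_mv_bound[OF K])
      finally show "norm (mpow A n $ i $ j) \<le> K ^ n" by (simp add: norm_axis_complex)
    qed
    finally show "norm (mpow A n $ i) \<le> (\<Sum>j\<in>(UNIV::'d set). K ^ n)" .
  qed
  finally show ?thesis by simp
qed



definition Qc :: "real \<Rightarrow> nat \<Rightarrow> nat \<Rightarrow> real" where
  "Qc \<alpha> n k = (\<Prod>j=n-k..n. Gamma (real j - \<alpha> + 1))
                  / (Gamma (2 - \<alpha>) ^ (k + 1) * (\<Prod>j=n-k..n. Gamma (real j + 1)))"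

lemma aux_field2: "(G::real) > 0 \<Longrightarrow> P2 > 0 \<Longrightarrow> X > 0 \<Longrightarrow> Y > 0 \<Longrightarrow>
   P1 * X / (G ^ (k + 2) * (P2 * Y)) = (P1 / (G ^ (k + 1) * P2)) / (G * Y / X)"
  by (simp add: field_simps)

lemma Qc_Suc0: assumes "0 < \<alpha>" "\<alpha> < 1" shows "Qc \<alpha> (Suc n) 0 = 1 / cc \<alpha> (Suc n)"
  unfolding Qc_def cc_def by (simp add: algebra_simps)

lemma Qc_SucSuc: assumes "0 < \<alpha>" "\<alpha> < 1"
  shows "Qc \<alpha> (Suc n) (Suc k) = Qc \<alpha> n k / cc \<alpha> (Suc n)"
proof -
  define P1 where "P1 = (\<Prod>j=n-k..n. Gamma (real j - \<alpha> + 1))"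
  define P2 where "P2 = (\<Prod>j=n-k..n. Gamma (real j + 1))"
  have I: "{Suc n - Suc k..Suc n} = {n-k..Suc n}" by simp
  have p1: "(\<Prod>j=n-k..Suc n. Gamma (real j - \<alpha> + 1)) = P1 * Gamma (real (Suc n) - \<alpha> + 1)"
    unfolding P1_def by (subst prod.nat_ivl_Suc') (auto simp: mult.commute)
  have p2: "(\<Prod>j=n-k..Suc n. Gamma (real j + 1)) = P2 * Gamma (real (Suc n) + 1)"
    unfolding P2_def by (subst prod.nat_ivl_Suc') (auto simp: mult.commute)
  have pos: "Gamma (2 - \<alpha>) > 0" "P2 > 0" "Gamma (real (Suc n) - \<alpha> + 1) > 0" "Gamma (real (Suc n) + 1) > 0"
    using assms unfolding P2_def by (auto intro!: Gamma_real_pos prod_pos)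
  have "Qc \<alpha> (Suc n) (Suc k) = P1 * Gamma (real (Suc n) - \<alpha> + 1) /
          (Gamma (2 - \<alpha>) ^ (k + 2) * (P2 * Gamma (real (Suc n) + 1)))"
    unfolding Qc_def I p1 p2 by simp
  also have "\<dots> = (P1 / (Gamma (2 - \<alpha>) ^ (k + 1) * P2)) /
      (Gamma (2 - \<alpha>) * Gamma (real (Suc n) + 1) / Gamma (real (Suc n) - \<alpha> + 1))"
    by (rule aux_field2) (use pos in auto)
  also have "\<dots> = Qc \<alpha> n k / cc \<alpha> (Suc n)"
    unfolding Qc_def cc_def P1_def P2_def by (simp add: algebra_simps)
  finally show ?thesis .
qed



theorem mainTheorem14:
  fixes \<alpha> T :: real and A :: "complex ^'d ^'d" and x0 :: "complex ^'d"
    and \<theta> :: "nat \<Rightarrow> complex ^'d" and x :: "real \<Rightarrow> complex ^'d"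
  assumes "0 < \<alpha>" "\<alpha> < 1" "0 < T"
    and "summable (\<lambda>n. norm (\<theta> n) * T ^ n)"
    and "x = (\<lambda>t. Emat \<alpha> (t *\<^sub>R A) *v x0
           + (\<Sum>n. (\<Sum>k<n. ((\<Prod>j=n-k..n. Gamma (real j - \<alpha> + 1))
                  / (Gamma (2 - \<alpha>) ^ (k + 1) * (\<Prod>j=n-k..n. Gamma (real j + 1))) * t ^ n)
                  *\<^sub>R (mpow A k *v \<theta> (n - k - 1)))))"
  shows "x 0 = x0 \<and>
    (\<forall>t\<in>{0..T}. LD \<alpha> x t = A *v x t + (\<Sum>n. (t ^ n) *\<^sub>R \<theta> n))"
proof -
  note \<alpha> = assms(1,2) and T = assms(3) and s\<theta> = assms(4) and xdef = assms(5)
  obtain K where K: "\<And>v. norm (A *v v) \<le> norm v * K" "K > 0"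
    using bounded_linear.pos_bounded[OF matrix_vector_mul_bounded_linear[of A]] by blast
  define e where "e n = Ecoeff \<alpha> n *\<^sub>R (mpow A n *v x0)" for n
  define b where "b n = (\<Sum>k<n. Qc \<alpha> n k *\<^sub>R (mpow A k *v \<theta> (n - k - 1)))" for n
  define a where "a n = e n + b n" for n
  define g where "g n = A *v a n + \<theta> n" for n
  have ccp: "cc \<alpha> n > 0" for n using cc_pos \<alpha> by auto
  have a0: "a 0 = x0" by (simp add: a_def e_def b_def Ecoeff_0)
  have eS: "e (Suc n) = (1 / cc \<alpha> (Suc n)) *\<^sub>R (A *v e n)" for n
    unfolding e_def mpow_Suc_mv Ecoeff_Suc[OF \<alpha>(2,1)] mv_scaleR by (simp add: divide_inverse mult.commute)
  have bS: "b (Suc n) = (1 / cc \<alpha> (Suc n)) *\<^sub>R (A *v b n + \<theta> n)" for n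
  proof -
    have "b (Suc n) = Qc \<alpha> (Suc n) 0 *\<^sub>R (mpow A 0 *v \<theta> n)
        + (\<Sum>k<n. Qc \<alpha> (Suc n) (Suc k) *\<^sub>R (mpow A (Suc k) *v \<theta> (n - k - 1)))"
      unfolding b_def by (subst sum.lessThan_Suc_shift) simp
    also have "\<dots> = (1 / cc \<alpha> (Suc n)) *\<^sub>R \<theta> n
        + (1 / cc \<alpha> (Suc n)) *\<^sub>R (\<Sum>k<n. A *v (Qc \<alpha> n k *\<^sub>R (mpow A k *v \<theta> (n - k - 1))))"
      by (simp add: Qc_Suc0[OF \<alpha>] Qc_SucSuc[OF \<alpha>] mpow_Suc_mv matrix_vector_mul_assoc[symmetric] mv_scaleR scaleR_sum_right divide_inverse mult.commute)
    also have "\<dots> = (1 / cc \<alpha> (Suc n)) *\<^sub>R (A *v b n + \<theta> n)"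
      unfolding b_def mv_sum by (simp add: scaleR_add_right)
    finally show ?thesis .
  qed
  have rec: "a (Suc n) = (1 / cc \<alpha> (Suc n)) *\<^sub>R g n" for n
    unfolding a_def g_def eS bS by (simp add: mv_add scaleR_add_right add_ac)
  obtain N where N: "\<And>n. n \<ge> N \<Longrightarrow> cc \<alpha> (Suc n) \<ge> 2 * K * T"
    using cc_eventually_ge[OF \<alpha>(2,1)] by blast
  have sa: "summable (\<lambda>n. norm (a n) * T ^ n)"
  proof (rule summable_rec[where N=N and w="\<lambda>n. T * (norm (\<theta> n) * T ^ n)"])
    fix n assume n: "n \<ge> N"
    have c1: "cc \<alpha> (Suc n) \<ge> 1" by (rule cc_ge1[OF \<alpha>(2,1)])
    have "norm (a (Suc n)) = norm (g n) / cc \<alpha> (Suc n)"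
      using ccp[of "Suc n"] by (simp add: rec)
    also have "\<dots> \<le> (norm (a n) * K + norm (\<theta> n)) / cc \<alpha> (Suc n)"
      unfolding g_def using ccp[of "Suc n"]
      by (intro divide_right_mono order_trans[OF norm_triangle_ineq] add_right_mono K(1)) auto
    also have "\<dots> = norm (a n) * (K / cc \<alpha> (Suc n)) + norm (\<theta> n) / cc \<alpha> (Suc n)"
      by (simp add: add_divide_distrib)
    also have "\<dots> \<le> norm (a n) * (1 / (2 * T)) + norm (\<theta> n)"
    proof (intro add_mono mult_left_mono)
      show "K / cc \<alpha> (Suc n) \<le> 1 / (2 * T)"
        using N[OF n] ccp[of "Suc n"] T K(2) by (simp add: field_simps)
      show "norm (\<theta> n) / cc \<alpha> (Suc n) \<le> norm (\<theta> n)"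
      proof -
        have "norm (\<theta> n) * 1 \<le> norm (\<theta> n) * cc \<alpha> (Suc n)"
          using c1 by (intro mult_left_mono) auto
        then show ?thesis using ccp[of "Suc n"] by (simp add: divide_le_eq)
      qed
    qed auto
    finally have "norm (a (Suc n)) * T ^ Suc n \<le> (norm (a n) * (1 / (2 * T)) + norm (\<theta> n)) * T ^ Suc n"
      using T by (intro mult_right_mono) auto
    then show "norm (a (Suc n)) * T ^ Suc n \<le> norm (a n) * T ^ n / 2 + T * (norm (\<theta> n) * T ^ n)"
    proof -
      have "(norm (a n) * (1 / (2 * T)) + norm (\<theta> n)) * T ^ Suc n
            = norm (a n) * T ^ n * (T / (2 * T)) + T * (norm (\<theta> n) * T ^ n)"
        by (simp add: algebra_simps)
      also have "T / (2 * T) = 1 / 2" using T by simp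
      finally show ?thesis using \<open>norm (a (Suc n)) * T ^ Suc n \<le> _\<close> by simp
    qed
  qed (use s\<theta> T in \<open>auto intro: summable_mult\<close>)
  have sg: "summable (\<lambda>n. norm (g n) * T ^ n)"
  proof (rule summable_comparison_test'[where g="\<lambda>n. K * (norm (a n) * T ^ n) + norm (\<theta> n) * T ^ n"])
    show "summable (\<lambda>n. K * (norm (a n) * T ^ n) + norm (\<theta> n) * T ^ n)"
      by (intro summable_add summable_mult sa s\<theta>)
    fix n
    have "norm (g n) \<le> norm (a n) * K + norm (\<theta> n)"
      unfolding g_def by (intro order_trans[OF norm_triangle_ineq] add_right_mono K(1))
    then have "norm (g n) * T ^ n \<le> (norm (a n) * K + norm (\<theta> n)) * T ^ n"
      using T by (intro mult_right_mono) auto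
    then show "norm (norm (g n) * T ^ n) \<le> K * (norm (a n) * T ^ n) + norm (\<theta> n) * T ^ n"
      using T by (simp add: algebra_simps)
  qed
  have xser: "x t = (\<Sum>n. t ^ n *\<^sub>R a n)" if t: "t \<in> {-T..T}" for t
  proof -
    have tT: "\<bar>t\<bar> \<le> T" using t by auto
    define C where "C = real CARD('d) * real CARD('d)"
    have se_norm: "summable (\<lambda>n. norm ((Ecoeff \<alpha> n * t ^ n) *\<^sub>R mpow A n))"
    proof (rule summable_comparison_test'[where g="\<lambda>n. C * (Ecoeff \<alpha> n * (\<bar>t\<bar> * K) ^ n)"])
      show "summable (\<lambda>n. C * (Ecoeff \<alpha> n * (\<bar>t\<bar> * K) ^ n))"
        by (intro summable_mult summable_Ecoeff \<alpha>) (use K in auto)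
      fix n
      have "norm (mpow A n) \<le> C * K ^ n" unfolding C_def
        by (rule mpow_norm_bound) (use K in auto)
      then have "\<bar>Ecoeff \<alpha> n * t ^ n\<bar> * norm (mpow A n) \<le> \<bar>Ecoeff \<alpha> n * t ^ n\<bar> * (C * K ^ n)"
        by (intro mult_left_mono) auto
      then show "norm (norm ((Ecoeff \<alpha> n * t ^ n) *\<^sub>R mpow A n)) \<le> C * (Ecoeff \<alpha> n * (\<bar>t\<bar> * K) ^ n)"
        using Ecoeff_pos[OF \<alpha>(2,1), of n] by (simp add: abs_mult power_abs power_mult_distrib mult_ac)
    qed
    have semat: "summable (\<lambda>n. (Ecoeff \<alpha> n * t ^ n) *\<^sub>R mpow A n)"
      by (rule summable_norm_cancel[OF se_norm])
    have E: "Emat \<alpha> (t *\<^sub>R A) *v x0 = (\<Sum>n. t ^ n *\<^sub>R e n)"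
    proof -
      have "Emat \<alpha> (t *\<^sub>R A) = (\<Sum>n. (Ecoeff \<alpha> n * t ^ n) *\<^sub>R mpow A n)"
        unfolding Emat_def mpow_scaleR by (simp add: scaleR_scaleR)
      then have "Emat \<alpha> (t *\<^sub>R A) *v x0 = (\<Sum>n. ((Ecoeff \<alpha> n * t ^ n) *\<^sub>R mpow A n) *v x0)"
        using bounded_linear.suminf[OF bl_mv_left semat] by simp
      also have "\<dots> = (\<Sum>n. t ^ n *\<^sub>R e n)"
        unfolding e_def scaleR_mat_mv by (simp add: scaleR_scaleR mult.commute)
      finally show ?thesis .
    qed
    have se: "summable (\<lambda>n. t ^ n *\<^sub>R e n)"
    proof -
      have "summable (\<lambda>n. ((Ecoeff \<alpha> n * t ^ n) *\<^sub>R mpow A n) *v x0)"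
        by (rule bounded_linear.summable[OF bl_mv_left semat])
      then show ?thesis unfolding e_def scaleR_mat_mv by (simp add: scaleR_scaleR mult.commute)
    qed
    have sA: "summable (\<lambda>n. t ^ n *\<^sub>R a n)" by (rule powser_summable_le(2)[OF sa tT])
    have sb: "summable (\<lambda>n. t ^ n *\<^sub>R b n)"
    proof -
      have "summable (\<lambda>n. t ^ n *\<^sub>R a n - t ^ n *\<^sub>R e n)" by (rule summable_diff[OF sA se])
      then show ?thesis by (simp add: a_def scaleR_add_right)
    qed
    have B: "(\<Sum>n. (\<Sum>k<n. ((\<Prod>j=n-k..n. Gamma (real j - \<alpha> + 1))
                  / (Gamma (2 - \<alpha>) ^ (k + 1) * (\<Prod>j=n-k..n. Gamma (real j + 1))) * t ^ n)
                  *\<^sub>R (mpow A k *v \<theta> (n - k - 1)))) = (\<Sum>n. t ^ n *\<^sub>R b n)"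
      unfolding b_def Qc_def[symmetric] by (simp add: scaleR_sum_right scaleR_scaleR mult.commute)
    have "x t = (\<Sum>n. t ^ n *\<^sub>R e n) + (\<Sum>n. t ^ n *\<^sub>R b n)"
      unfolding xdef E[symmetric] B[symmetric] by simp
    also have "\<dots> = (\<Sum>n. t ^ n *\<^sub>R a n)"
      unfolding suminf_add[OF se sb] a_def by (simp add: scaleR_add_right)
    finally show ?thesis .
  qed
  have LDx: "\<forall>t\<in>{0..T}. LD \<alpha> x t = (\<Sum>n. t ^ n *\<^sub>R g n)"
    by (rule LD_powser[OF \<alpha> T sg rec xser])
  show ?thesis
  proof
    show "x 0 = x0" using xser[of 0] T by (simp add: powser_zero_scaleR a0)
    show "\<forall>t\<in>{0..T}. LD \<alpha> x t = A *v x t + (\<Sum>n. t ^ n *\<^sub>R \<theta> n)"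
    proof
      fix t assume t: "t \<in> {0..T}"
      then have tT: "\<bar>t\<bar> \<le> T" by auto
      have sA: "summable (\<lambda>n. t ^ n *\<^sub>R a n)" by (rule powser_summable_le(2)[OF sa tT])
      have sT: "summable (\<lambda>n. t ^ n *\<^sub>R \<theta> n)" by (rule powser_summable_le(2)[OF s\<theta> tT])
      have "A *v x t = (\<Sum>n. A *v (t ^ n *\<^sub>R a n))"
        using xser[of t] t bounded_linear.suminf[OF matrix_vector_mul_bounded_linear sA] by simp
      also have "\<dots> = (\<Sum>n. t ^ n *\<^sub>R (A *v a n))" by (simp add: mv_scaleR)
      finally have "A *v x t + (\<Sum>n. t ^ n *\<^sub>R \<theta> n) = (\<Sum>n. t ^ n *\<^sub>R (A *v a n)) + (\<Sum>n. t ^ n *\<^sub>R \<theta> n)"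
        by simp
      also have "\<dots> = (\<Sum>n. t ^ n *\<^sub>R g n)"
      proof -
        have sAa: "summable (\<lambda>n. t ^ n *\<^sub>R (A *v a n))"
          using bounded_linear.summable[OF matrix_vector_mul_bounded_linear[of A] sA] by (simp add: mv_scaleR)
        show ?thesis unfolding suminf_add[OF sAa sT] g_def by (simp add: scaleR_add_right)
      qed
      finally show "LD \<alpha> x t = A *v x t + (\<Sum>n. t ^ n *\<^sub>R \<theta> n)" using LDx t by simp
    qed
  qed
qed

end
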